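(* Let $G$ be a group with identity $e$, $A$ a set with at least two elements, and $\tau : A^G \to A^G$ a non-constant cellular automaton with minimal local map $\mu : A^S \to A$. Then $\tau$ is lazy if and only if $e \in S$ and $\mu$ has a unique active transition, i.e., there is exactly one $z \in A^S$ with $\mu(z) \neq z(e)$.
   Context: $A^G$ is the set of maps $G \to A$ with shift action $(g\cdot x)(h) := x(hg)$. A cellular automaton is a map $\tau : A^G \to A^G$ with a finite $S \subseteq G$ (a neighborhood) and local map $\mu : A^S \to A$ such that $\tau(x)(g) = \mu((g\cdot x)|_S)$ for all $x, g$. The minimal neighborhood of $\tau$ is the (unique) neighborhood of smallest cardinality, and the minimal local map is the local defining map on the minimal neighborhood. $\tau$ is lazy if there is a local defining map $\mu : A^S \to A$ for $\tau$ with $e \in S$ and $p \in A^S$ such that for all $z \in A^S$: $\mu(z) = z(e)$ iff $z \neq p$. An active transition of $\mu : A^S \to A$ (with $e \in S$) is a pattern $z \in A^S$ with $\mu(z) \neq z(e)$. *)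

theory Defs
  imports "HOL-Library.FuncSet"
begin

text \<open>The group G is a type of class group_add (written additively: identity 0,
  product g h rendered as h + g ordering kept as in the paper, i.e. hg is h + g).
  Configurations are functions 'g => 'a; patterns in A^S are extensional
  functions in S ->E UNIV.\<close>

definition shift :: "'g::group_add \<Rightarrow> ('g \<Rightarrow> 'a) \<Rightarrow> ('g \<Rightarrow> 'a)" where
  "shift g x = (\<lambda>h. x (h + g))"

definition is_local_map ::
  "(('g::group_add \<Rightarrow> 'a) \<Rightarrow> ('g \<Rightarrow> 'a)) \<Rightarrow> 'g set \<Rightarrow> (('g \<Rightarrow> 'a) \<Rightarrow> 'a) \<Rightarrow> bool" where
  "is_local_map \<tau> S \<mu> \<longleftrightarrow> finite S \<and> (\<forall>x g. \<tau> x g = \<mu> (restrict (shift g x) S))"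

definition cellular_automaton :: "(('g::group_add \<Rightarrow> 'a) \<Rightarrow> ('g \<Rightarrow> 'a)) \<Rightarrow> bool" where
  "cellular_automaton \<tau> \<longleftrightarrow> (\<exists>S \<mu>. is_local_map \<tau> S \<mu>)"

definition is_neighborhood :: "(('g::group_add \<Rightarrow> 'a) \<Rightarrow> ('g \<Rightarrow> 'a)) \<Rightarrow> 'g set \<Rightarrow> bool" where
  "is_neighborhood \<tau> S \<longleftrightarrow> (\<exists>\<mu>. is_local_map \<tau> S \<mu>)"

definition minimal_neighborhood :: "(('g::group_add \<Rightarrow> 'a) \<Rightarrow> ('g \<Rightarrow> 'a)) \<Rightarrow> 'g set \<Rightarrow> bool" where
  "minimal_neighborhood \<tau> S \<longleftrightarrow> is_neighborhood \<tau> S \<and>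
     (\<forall>S'. is_neighborhood \<tau> S' \<longrightarrow> card S \<le> card S')"

definition lazy :: "(('g::group_add \<Rightarrow> 'a) \<Rightarrow> ('g \<Rightarrow> 'a)) \<Rightarrow> bool" where
  "lazy \<tau> \<longleftrightarrow> (\<exists>S \<mu> p. is_local_map \<tau> S \<mu> \<and> 0 \<in> S \<and> p \<in> S \<rightarrow>\<^sub>E UNIV \<and>
      (\<forall>z \<in> S \<rightarrow>\<^sub>E UNIV. \<mu> z = z 0 \<longleftrightarrow> z \<noteq> p))"

definition active_transition :: "'g::group_add set \<Rightarrow> (('g \<Rightarrow> 'a) \<Rightarrow> 'a) \<Rightarrow> ('g \<Rightarrow> 'a) \<Rightarrow> bool" where
  "active_transition S \<mu> z \<longleftrightarrow> z \<in> S \<rightarrow>\<^sub>E UNIV \<and> \<mu> z \<noteq> z 0"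

end

theory Submission
  imports Defs
begin

lemma shift0[simp]: "shift (0::'g::group_add) x = x"
  by (simp add: shift_def)

lemma lm_at0:
  assumes "is_local_map \<tau> S \<mu>"
  shows "\<tau> x 0 = \<mu> (restrict x S)"
  using assms unfolding is_local_map_def by (metis shift0)

lemma lm_agree:
  assumes "is_local_map \<tau> S \<mu>" and "\<And>h. h \<in> S \<Longrightarrow> x h = y h"
  shows "\<tau> x 0 = \<tau> y 0"
proof -
  have "restrict x S = restrict y S" using assms(2) by (auto simp: restrict_def)
  thus ?thesis using lm_at0[OF assms(1)] by metis
qed

lemma lm_ext:
  assumes "is_local_map \<tau> S \<mu>" and "z \<in> S \<rightarrow>\<^sub>E UNIV"
  shows "\<mu> z = \<tau> z 0"
proof -
  have "restrict z S = z" using assms(2) by (simp add: PiE_restrict)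
  thus ?thesis using lm_at0[OF assms(1), of z] by simp
qed

lemma inter_nbhd:
  fixes \<tau> :: "('g::group_add \<Rightarrow> 'a) \<Rightarrow> ('g \<Rightarrow> 'a)"
  assumes m1: "is_local_map \<tau> S1 \<mu>1" and m2: "is_local_map \<tau> S2 \<mu>2"
  shows "is_local_map \<tau> (S1 \<inter> S2) (\<lambda>z. \<tau> z 0)"
  unfolding is_local_map_def
proof (intro conjI allI)
  show "finite (S1 \<inter> S2)" using m1 by (simp add: is_local_map_def)
  fix x :: "'g \<Rightarrow> 'a" and g :: 'g
  define y where "y = shift g x"
  define r where "r = restrict y (S1 \<inter> S2)"
  define w where "w = (\<lambda>h. if h \<in> S1 then y h else r h)"
  have "\<tau> x g = \<mu>1 (restrict y S1)" using m1 by (simp add: is_local_map_def y_def)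
  also have "\<dots> = \<tau> y 0" using lm_at0[OF m1] by simp
  also have "\<dots> = \<tau> w 0" by (rule lm_agree[OF m1]) (simp add: w_def)
  also have "\<dots> = \<tau> r 0" by (rule lm_agree[OF m2]) (simp add: w_def r_def)
  finally show "\<tau> x g = \<tau> (restrict (shift g x) (S1 \<inter> S2)) 0" by (simp add: r_def y_def)
qed

lemma min_subset:
  assumes "minimal_neighborhood \<tau> S" "is_local_map \<tau> S' \<mu>'"
  shows "S \<subseteq> S'"
proof -
  obtain \<mu> where m: "is_local_map \<tau> S \<mu>" using assms(1)
    unfolding minimal_neighborhood_def is_neighborhood_def by blast
  have "is_neighborhood \<tau> (S \<inter> S')" using inter_nbhd[OF m assms(2)]
    unfolding is_neighborhood_def by blast
  hence "card S \<le> card (S \<inter> S')" using assms(1) unfolding minimal_neighborhood_def by blast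
  moreover have "finite S" using m by (simp add: is_local_map_def)
  ultimately have "S \<inter> S' = S"
    by (metis Int_lower1 card_seteq)
  thus ?thesis by blast
qed

theorem proposition1:
  fixes \<tau> :: "('g::group_add \<Rightarrow> 'a) \<Rightarrow> ('g \<Rightarrow> 'a)"
    and S :: "'g set" and \<mu> :: "('g \<Rightarrow> 'a) \<Rightarrow> 'a"
  assumes "\<exists>a b :: 'a. a \<noteq> b"
    and "cellular_automaton \<tau>"
    and "\<exists>x y. \<tau> x \<noteq> \<tau> y"
    and "minimal_neighborhood \<tau> S"
    and "is_local_map \<tau> S \<mu>"
  shows "lazy \<tau> \<longleftrightarrow> 0 \<in> S \<and> (\<exists>!z. active_transition S \<mu> z)"
proof
  assume "0 \<in> S \<and> (\<exists>!z. active_transition S \<mu> z)"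
  then obtain p where S0: "0 \<in> S" and p: "active_transition S \<mu> p"
    and u: "\<And>z. active_transition S \<mu> z \<Longrightarrow> z = p" by blast
  have "p \<in> S \<rightarrow>\<^sub>E UNIV" using p by (simp add: active_transition_def)
  moreover have "\<forall>z \<in> S \<rightarrow>\<^sub>E UNIV. \<mu> z = z 0 \<longleftrightarrow> z \<noteq> p"
    using u p unfolding active_transition_def by blast
  ultimately show "lazy \<tau>" unfolding lazy_def using assms(5) S0 by blast
next
  assume "lazy \<tau>"
  then obtain S' \<mu>' p where m': "is_local_map \<tau> S' \<mu>'" and S'0: "0 \<in> S'"
    and pP: "p \<in> S' \<rightarrow>\<^sub>E UNIV" and L: "\<forall>z \<in> S' \<rightarrow>\<^sub>E UNIV. \<mu>' z = z 0 \<longleftrightarrow> z \<noteq> p"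
    unfolding lazy_def by blast
  have sub: "S \<subseteq> S'" using min_subset[OF assms(4) m'] .
  have S0: "0 \<in> S"
  proof (rule ccontr)
    assume n0: "0 \<notin> S"
    show False
    proof (cases "\<exists>s\<in>S'. s \<noteq> 0")
      case False
      hence "S = {}" using sub n0 by fastforce
      hence "\<forall>x g. \<tau> x g = \<mu> (\<lambda>_. undefined)" using assms(5)
        unfolding is_local_map_def by (simp add: restrict_def)
      thus False using assms(3) by auto
    next
      case True
      then obtain s where s: "s \<in> S'" "s \<noteq> 0" by blast
      obtain a :: 'a where a: "a \<noteq> p s" using assms(1) by metis
      define z where "z = p(s := a)"
      obtain c :: 'a where c: "c \<noteq> z 0" using assms(1) by metis
      define z' where "z' = z(0 := c)"
      have zP: "z \<in> S' \<rightarrow>\<^sub>E UNIV" using pP s by (auto simp: z_def PiE_def extensional_def)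
      have z'P: "z' \<in> S' \<rightarrow>\<^sub>E UNIV" using zP S'0 by (auto simp: z'_def PiE_def extensional_def)
      have "z \<noteq> p" using a by (auto simp: z_def dest: fun_cong[where x=s])
      hence e1: "\<tau> z 0 = z 0" using L zP lm_ext[OF m' zP] by metis
      have "z' \<noteq> p" using a s by (auto simp: z'_def z_def dest: fun_cong[where x=s])
      hence "\<tau> z' 0 = z' 0" using L z'P lm_ext[OF m' z'P] by metis
      hence e2: "\<tau> z' 0 = c" by (simp add: z'_def)
      have "\<tau> z 0 = \<tau> z' 0" by (rule lm_agree[OF assms(5)]) (use n0 in \<open>auto simp: z'_def\<close>)
      thus False using e1 e2 c by simp
    qed
  qed
  define q where "q = restrict p S"
  have qS: "q \<in> S \<rightarrow>\<^sub>E UNIV" by (simp add: q_def)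
  have qS': "q \<in> S' \<rightarrow>\<^sub>E UNIV" using sub by (auto simp: q_def PiE_def extensional_def)
  have "\<tau> p 0 \<noteq> p 0" using L pP lm_ext[OF m' pP] by metis
  moreover have "\<tau> q 0 = \<tau> p 0" by (rule lm_agree[OF assms(5)]) (simp add: q_def)
  ultimately have "\<mu>' q \<noteq> q 0" using lm_ext[OF m' qS'] S0 by (simp add: q_def)
  hence qp: "q = p" using L qS' by blast
  have act: "\<And>z. active_transition S \<mu> z \<longleftrightarrow> z = p"
  proof -
    fix z
    show "active_transition S \<mu> z \<longleftrightarrow> z = p"
    proof
      assume A: "active_transition S \<mu> z"
      hence zS: "z \<in> S \<rightarrow>\<^sub>E UNIV" by (simp add: active_transition_def)
      hence zS': "z \<in> S' \<rightarrow>\<^sub>E UNIV" using sub by (auto simp: PiE_def extensional_def)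
      have "\<mu>' z \<noteq> z 0" using A lm_ext[OF assms(5) zS] lm_ext[OF m' zS']
        by (simp add: active_transition_def)
      thus "z = p" using L zS' by blast
    next
      assume "z = p"
      hence zS: "z \<in> S \<rightarrow>\<^sub>E UNIV" and zS': "z \<in> S' \<rightarrow>\<^sub>E UNIV" using qS qS' qp by auto
      have "\<mu>' z \<noteq> z 0" using L zS' \<open>z = p\<close> by blast
      thus "active_transition S \<mu> z" using zS lm_ext[OF assms(5) zS] lm_ext[OF m' zS']
        by (simp add: active_transition_def)
    qed
  qed
  show "0 \<in> S \<and> (\<exists>!z. active_transition S \<mu> z)" using S0 act by auto
qed

end
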